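(* Let $\gamma_2>0$. For every time step $t\ge1$, the first difference $\Delta L_3(t):=L_3(t+1)-L_3(t)$ of $$L_3(t)=\frac{1}{l_c\gamma_2}\operatorname{tr}\!\left[\big(\tilde w_c^{(1)}(t)\big)^T\tilde w_c^{(1)}(t)\right]$$ satisfies $$\Delta L_3(t)\le\frac1{\gamma_2}\Big(\alpha^2 l_c\, e_c(t)^2\,\|a(t)\|^2\|y(t)\|^2+\alpha\big(a(t)^T\tilde w_c^{(1)}(t)y(t)\big)^2+\alpha\, e_c(t)^2\Big),$$ where $e_c(t)=\alpha\hat w_c^{(2)}(t)\phi_c(t)+r(t)-\hat w_c^{(2)}(t-1)\phi_c(t-1)$.
   Context: Setting (action-dependent heuristic dynamic programming with two one-hidden-layer networks). Fix integers $m,n,N_a,N_c\ge1$, a discount factor $\alpha\in(0,1]$ and learning rates $l_c,l_a>0$. Let $\psi(s)=\frac{1-e^{-s}}{1+e^{-s}}$, applied componentwise to vectors (note $\psi'(s)=\tfrac12(1-\psi(s)^2)$). At each integer time $t$ there are a state $x(t)\in\mathbb R^m$ and a scalar reward $r(t)$. Action network: weights $\hat w_a^{(1)}(t)\in\mathbb R^{N_a\times m}$, $\hat w_a^{(2)}(t)\in\mathbb R^{n\times N_a}$; hidden output $\phi_a(t)=\psi(\hat w_a^{(1)}(t)x(t))\in\mathbb R^{N_a}$; control $u(t)=\hat w_a^{(2)}(t)\phi_a(t)\in\mathbb R^n$. Critic network: weights $\hat w_c^{(1)}(t)\in\mathbb R^{N_c\times(m+n)}$, $\hat w_c^{(2)}(t)\in\mathbb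 R^{1\times N_c}$ (a row vector); input $y(t)=(x(t)^T,u(t)^T)^T\in\mathbb R^{m+n}$; hidden output $\phi_c(t)=\psi(\hat w_c^{(1)}(t)y(t))\in\mathbb R^{N_c}$; output $\hat J(t)=\hat w_c^{(2)}(t)\phi_c(t)$. Critic error $e_c(t)=\alpha\hat J(t)+r(t)-\hat J(t-1)$. Auxiliary quantities: $C(t)\in\mathbb R^{N_c\times n}$ with $C_{ij}(t)=\tfrac12(1-\phi_{c_i}(t)^2)\,(\hat w_c^{(1)}(t))_{i,m+j}$; $a(t)\in\mathbb R^{N_c}$ with $a_i(t)=\tfrac12(1-\phi_{c_i}(t)^2)(\hat w_c^{(2)}(t))_i$; $D(t)\in\mathbb R^{N_a\times n}$ with $D_{ij}(t)=\tfrac12(1-\phi_{a_i}(t)^2)(\hat w_a^{(2)}(t))_{ji}$. The weights are updated by gradient descent: $\hat w_c^{(2)}(t+1)=\hat w_c^{(2)}(t)-l_c\alpha e_c(t)\phi_c(t)^T$, $\hat w_c^{(1)}(t+1)=\hat w_c^{(1)}(t)-l_c\alpha e_c(t)\,a(t)y(t)^T$, $\hat w_a^{(2)}(t+1)=\hat w_a^{(2)}(t)-l_a\hat J(t)\,(\hat w_c^{(2)}(t)C(t))^T\phi_a(t)^T$, $\hat w_a^{(1)}(t+1)=\hat w_a^{(1)}(t)-l_a\hat J(t)\,(\hat w_c^{(2)}(t)C(t)D(t)^T)^T x(t)^T$. Fixed (time-independent) "optimal" weights $w_c^{*(1)},w_c^{*(2)},w_a^{*(1)},w_a^{*(2)}$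 of the same shapes are given, and the estimation errors are $\tilde w_\bullet(t)=\hat w_\bullet(t)-w_\bullet^{*}$. Assumption 1: $\|w_a^*\|\le w_a^{\max}$ and $\|w_c^*\|\le w_c^{\max}$. Norms are Euclidean for vectors and Frobenius for matrices. *)

theory Defs
  imports "HOL-Analysis.Analysis"
begin

definition psi :: "real \<Rightarrow> real" where
  "psi s = (1 - exp (- s)) / (1 + exp (- s))"

definition psiv :: "real ^ 'k \<Rightarrow> real ^ 'k" where
  "psiv v = (\<chi> i. psi (v $ i))"

definition outer :: "real ^ 'r \<Rightarrow> real ^ 'c \<Rightarrow> real ^ 'c ^ 'r" where
  "outer p q = (\<chi> i j. p $ i * q $ j)"

text \<open>Stacked vector (x^T, u^T)^T, indexed by the disjoint sum of index types.\<close>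
definition stack :: "real ^ 'm \<Rightarrow> real ^ 'n \<Rightarrow> real ^ ('m + 'n)" where
  "stack x u = (\<chi> i. case i of Inl j \<Rightarrow> x $ j | Inr j \<Rightarrow> u $ j)"

text \<open>Quantities of the ADHDP scheme, given the weight trajectories.
  Matrices N x M are real^M^N (rows indexed by the first index);
  the row vector \<open>w_c^{(2)}\<close> is represented as real^Nc.\<close>

definition phi_a :: "(nat \<Rightarrow> real ^ 'm ^ 'na) \<Rightarrow> (nat \<Rightarrow> real ^ 'm) \<Rightarrow> nat \<Rightarrow> real ^ 'na" where
  "phi_a Wa1 x t = psiv (Wa1 t *v x t)"

definition ctrl :: "(nat \<Rightarrow> real ^ 'm ^ 'na) \<Rightarrow> (nat \<Rightarrow> real ^ 'na ^ 'n) \<Rightarrow> (nat \<Rightarrow> real ^ 'm) \<Rightarrow> nat \<Rightarrow> real ^ 'n" where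
  "ctrl Wa1 Wa2 x t = Wa2 t *v phi_a Wa1 x t"

definition yv :: "(nat \<Rightarrow> real ^ 'm ^ 'na) \<Rightarrow> (nat \<Rightarrow> real ^ 'na ^ 'n) \<Rightarrow> (nat \<Rightarrow> real ^ 'm) \<Rightarrow> nat \<Rightarrow> real ^ ('m + 'n)" where
  "yv Wa1 Wa2 x t = stack (x t) (ctrl Wa1 Wa2 x t)"

definition phi_c :: "(nat \<Rightarrow> real ^ ('m + 'n) ^ 'nc) \<Rightarrow> (nat \<Rightarrow> real ^ 'm ^ 'na) \<Rightarrow> (nat \<Rightarrow> real ^ 'na ^ 'n) \<Rightarrow> (nat \<Rightarrow> real ^ 'm) \<Rightarrow> nat \<Rightarrow> real ^ 'nc" where
  "phi_c Wc1 Wa1 Wa2 x t = psiv (Wc1 t *v yv Wa1 Wa2 x t)"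

definition Jhat :: "(nat \<Rightarrow> real ^ ('m + 'n) ^ 'nc) \<Rightarrow> (nat \<Rightarrow> real ^ 'nc) \<Rightarrow> (nat \<Rightarrow> real ^ 'm ^ 'na) \<Rightarrow> (nat \<Rightarrow> real ^ 'na ^ 'n) \<Rightarrow> (nat \<Rightarrow> real ^ 'm) \<Rightarrow> nat \<Rightarrow> real" where
  "Jhat Wc1 Wc2 Wa1 Wa2 x t = Wc2 t \<bullet> phi_c Wc1 Wa1 Wa2 x t"

text \<open>Critic error; only meaningful for t \<ge> 1 (uses time t-1).\<close>
definition ec :: "real \<Rightarrow> (nat \<Rightarrow> real) \<Rightarrow> (nat \<Rightarrow> real ^ ('m + 'n) ^ 'nc) \<Rightarrow> (nat \<Rightarrow> real ^ 'nc) \<Rightarrow> (nat \<Rightarrow> real ^ 'm ^ 'na) \<Rightarrow> (nat \<Rightarrow> real ^ 'na ^ 'n) \<Rightarrow> (nat \<Rightarrow> real ^ 'm) \<Rightarrow> nat \<Rightarrow> real" where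
  "ec \<alpha> r Wc1 Wc2 Wa1 Wa2 x t =
     \<alpha> * Jhat Wc1 Wc2 Wa1 Wa2 x t + r t - Jhat Wc1 Wc2 Wa1 Wa2 x (t - 1)"

definition avec :: "(nat \<Rightarrow> real ^ ('m + 'n) ^ 'nc) \<Rightarrow> (nat \<Rightarrow> real ^ 'nc) \<Rightarrow> (nat \<Rightarrow> real ^ 'm ^ 'na) \<Rightarrow> (nat \<Rightarrow> real ^ 'na ^ 'n) \<Rightarrow> (nat \<Rightarrow> real ^ 'm) \<Rightarrow> nat \<Rightarrow> real ^ 'nc" where
  "avec Wc1 Wc2 Wa1 Wa2 x t =
     (\<chi> i. (1/2) * (1 - (phi_c Wc1 Wa1 Wa2 x t $ i)^2) * (Wc2 t $ i))"

definition Cmat :: "(nat \<Rightarrow> real ^ ('m + 'n) ^ 'nc) \<Rightarrow> (nat \<Rightarrow> real ^ 'm ^ 'na) \<Rightarrow> (nat \<Rightarrow> real ^ 'na ^ 'n) \<Rightarrow> (nat \<Rightarrow> real ^ 'm) \<Rightarrow> nat \<Rightarrow> real ^ 'n ^ 'nc" where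
  "Cmat Wc1 Wa1 Wa2 x t =
     (\<chi> i j. (1/2) * (1 - (phi_c Wc1 Wa1 Wa2 x t $ i)^2) * (Wc1 t $ i $ Inr j))"

definition Dmat :: "(nat \<Rightarrow> real ^ 'm ^ 'na) \<Rightarrow> (nat \<Rightarrow> real ^ 'na ^ 'n) \<Rightarrow> (nat \<Rightarrow> real ^ 'm) \<Rightarrow> nat \<Rightarrow> real ^ 'n ^ 'na" where
  "Dmat Wa1 Wa2 x t =
     (\<chi> i j. (1/2) * (1 - (phi_a Wa1 x t $ i)^2) * (Wa2 t $ j $ i))"

definition adhdp_updates ::
  "real \<Rightarrow> real \<Rightarrow> real \<Rightarrow> (nat \<Rightarrow> real) \<Rightarrow> (nat \<Rightarrow> real ^ 'm)
   \<Rightarrow> (nat \<Rightarrow> real ^ ('m + 'n) ^ 'nc) \<Rightarrow> (nat \<Rightarrow> real ^ 'nc)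
   \<Rightarrow> (nat \<Rightarrow> real ^ 'm ^ 'na) \<Rightarrow> (nat \<Rightarrow> real ^ 'na ^ 'n) \<Rightarrow> bool" where
  "adhdp_updates \<alpha> lc la r x Wc1 Wc2 Wa1 Wa2 \<longleftrightarrow>
    (\<forall>t\<ge>1.
      (let e = ec \<alpha> r Wc1 Wc2 Wa1 Wa2 x t;
           J = Jhat Wc1 Wc2 Wa1 Wa2 x t;
           g = vector_matrix_mult (Wc2 t) (Cmat Wc1 Wa1 Wa2 x t)
       in Wc2 (t+1) = Wc2 t - (lc * \<alpha> * e) *\<^sub>R phi_c Wc1 Wa1 Wa2 x t
        \<and> Wc1 (t+1) = Wc1 t - (lc * \<alpha> * e) *\<^sub>R outer (avec Wc1 Wc2 Wa1 Wa2 x t) (yv Wa1 Wa2 x t)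
        \<and> Wa2 (t+1) = Wa2 t - (la * J) *\<^sub>R outer g (phi_a Wa1 x t)
        \<and> Wa1 (t+1) = Wa1 t - (la * J) *\<^sub>R outer (Dmat Wa1 Wa2 x t *v g) (x t)))"

end

theory Submission imports Defs begin
lemma tr: "trace (transpose (M::real^'a^'b) ** M) = (\<Sum>k\<in>UNIV. \<Sum>j\<in>UNIV. (M$k$j)^2)"
proof -
  have "trace (transpose M ** M) = (\<Sum>i\<in>UNIV. \<Sum>k\<in>UNIV. M$k$i * M$k$i)"
    by (simp add: trace_def transpose_def matrix_matrix_mult_def)
  also have "\<dots> = (\<Sum>k\<in>UNIV. \<Sum>i\<in>UNIV. M$k$i * M$k$i)" by (rule sum.swap)
  also have "\<dots> = (\<Sum>k\<in>UNIV. \<Sum>j\<in>UNIV. (M$k$j)^2)" by (simp add: power2_eq_square)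
  finally show ?thesis .
qed
lemma nsq: "(norm (v::real^'a))^2 = (\<Sum>k\<in>UNIV. (v$k)^2)"
  unfolding power2_norm_eq_inner inner_vec_def by (simp add: power2_eq_square)
lemma key:
  fixes M :: "real^'a^'b" and a :: "real^'b" and y :: "real^'a"
  shows "(\<Sum>k\<in>UNIV. \<Sum>j\<in>UNIV. ((M - c *\<^sub>R outer a y)$k$j)^2) - (\<Sum>k\<in>UNIV. \<Sum>j\<in>UNIV. (M$k$j)^2)
     = c^2 * (norm a)^2 * (norm y)^2 - 2*c*(a \<bullet> (M *v y))"
proof -
  have e: "((M - c *\<^sub>R outer a y)$k$j)^2 - (M$k$j)^2 = c^2 * ((a$k)^2 * (y$j)^2) - 2*c*(a$k * (M$k$j * y$j))" for k j
    by (simp add: outer_def power2_eq_square algebra_simps)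
  have "(\<Sum>k\<in>UNIV. \<Sum>j\<in>UNIV. ((M - c *\<^sub>R outer a y)$k$j)^2) - (\<Sum>k\<in>UNIV. \<Sum>j\<in>UNIV. (M$k$j)^2)
     = (\<Sum>k\<in>UNIV. \<Sum>j\<in>UNIV. c^2 * ((a$k)^2 * (y$j)^2) - 2*c*(a$k * (M$k$j * y$j)))"
    by (simp only: sum_subtractf[symmetric] e)
  also have "\<dots> = c^2 * (\<Sum>k\<in>UNIV. (a$k)^2) * (\<Sum>j\<in>UNIV. (y$j)^2) - 2*c*(\<Sum>k\<in>UNIV. a$k * (\<Sum>j\<in>UNIV. M$k$j * y$j))"
  proof -
    have 1: "c^2 * (\<Sum>k\<in>UNIV. (a$k)^2) * (\<Sum>j\<in>UNIV. (y$j)^2) = (\<Sum>k\<in>UNIV. \<Sum>j\<in>UNIV. c^2 * ((a$k)^2 * (y$j)^2))"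
    proof -
      have P: "(\<Sum>k\<in>UNIV. (a$k)^2) * (\<Sum>j\<in>UNIV. (y$j)^2) = (\<Sum>k\<in>UNIV. \<Sum>j\<in>UNIV. (a$k)^2 * (y$j)^2)"
        by (rule sum_product)
      have "c^2 * (\<Sum>k\<in>UNIV. (a$k)^2) * (\<Sum>j\<in>UNIV. (y$j)^2) = c^2 * ((\<Sum>k\<in>UNIV. (a$k)^2) * (\<Sum>j\<in>UNIV. (y$j)^2))"
        by (rule mult.assoc)
      also have "\<dots> = c^2 * (\<Sum>k\<in>UNIV. \<Sum>j\<in>UNIV. (a$k)^2 * (y$j)^2)" by (simp only: P)
      also have "\<dots> = (\<Sum>k\<in>UNIV. \<Sum>j\<in>UNIV. c^2 * ((a$k)^2 * (y$j)^2))" by (simp only: sum_distrib_left)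
      finally show ?thesis .
    qed
    have 2: "2*c*(\<Sum>k\<in>UNIV. a$k * (\<Sum>j\<in>UNIV. M$k$j * y$j)) = (\<Sum>k\<in>UNIV. \<Sum>j\<in>UNIV. 2*c*(a$k * (M$k$j * y$j)))"
      by (simp add: sum_distrib_left)
    show ?thesis unfolding 1 2 by (simp only: sum_subtractf)
  qed
  also have "\<dots> = c^2 * (norm a)^2 * (norm y)^2 - 2*c*(a \<bullet> (M *v y))"
    unfolding nsq inner_vec_def matrix_vector_mult_def by simp
  finally show ?thesis .
qed
lemma ineq:
  fixes lc \<alpha> \<gamma> e z A Y :: real
  assumes "0 < lc" "0 < \<alpha>" "0 < \<gamma>"
  shows "1/(lc*\<gamma>) * ((lc*\<alpha>*e)^2*A*Y - 2*(lc*\<alpha>*e)*z) \<le> 1/\<gamma>*(\<alpha>^2*lc*e^2*A*Y + \<alpha>*z^2 + \<alpha>*e^2)"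
proof -
  have x: "(lc*\<alpha>*e)^2*A*Y - 2*(lc*\<alpha>*e)*z = lc * (\<alpha>^2*lc*e^2*A*Y - \<alpha>*(2*e*z))"
    by (simp add: power2_eq_square algebra_simps)
  have eq: "1/(lc*\<gamma>) * ((lc*\<alpha>*e)^2*A*Y - 2*(lc*\<alpha>*e)*z) = 1/\<gamma>*(\<alpha>^2*lc*e^2*A*Y - \<alpha>*(2*e*z))"
    unfolding x using assms(1) by simp
  have "0 \<le> (z+e)^2" by simp
  hence "0 \<le> z^2+e^2+2*e*z" by (simp add: power2_sum mult.commute mult.left_commute)
  hence "- (2 * e * z) \<le> z^2 + e^2" by linarith
  hence "\<alpha> * (- (2 * e * z)) \<le> \<alpha> * (z^2 + e^2)"
    using assms(2) by (intro mult_left_mono) auto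
  hence "- (\<alpha> * (2 * e * z)) \<le> \<alpha> * z^2 + \<alpha> * e^2" by (simp add: distrib_left)
  hence "\<alpha>^2*lc*e^2*A*Y - \<alpha>*(2*e*z) \<le> \<alpha>^2*lc*e^2*A*Y + \<alpha>*z^2 + \<alpha>*e^2" by linarith
  thus ?thesis unfolding eq using assms(3) by (intro mult_left_mono) auto
qed

theorem lemma3:
  fixes \<alpha> lc la \<gamma>2 :: real
    and r :: "nat \<Rightarrow> real" and x :: "nat \<Rightarrow> real ^ ('m::finite)"
    and Wc1 :: "nat \<Rightarrow> real ^ ('m + ('n::finite)) ^ ('nc::finite)" and Wc2 :: "nat \<Rightarrow> real ^ 'nc"
    and Wa1 :: "nat \<Rightarrow> real ^ 'm ^ ('na::finite)" and Wa2 :: "nat \<Rightarrow> real ^ 'na ^ 'n"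
    and Wc1s :: "real ^ ('m + 'n) ^ 'nc"
    and L3 :: "nat \<Rightarrow> real"
    and t :: nat
  assumes "0 < \<alpha>" "\<alpha> \<le> 1" "0 < lc" "0 < la" "0 < \<gamma>2"
    and "adhdp_updates \<alpha> lc la r x Wc1 Wc2 Wa1 Wa2"
    and "\<And>s. L3 s = 1 / (lc * \<gamma>2) * trace (transpose (Wc1 s - Wc1s) ** (Wc1 s - Wc1s))"
    and "1 \<le> t"
  shows "L3 (t + 1) - L3 t \<le>
    1 / \<gamma>2 * (\<alpha>^2 * lc * (ec \<alpha> r Wc1 Wc2 Wa1 Wa2 x t)^2
                 * (norm (avec Wc1 Wc2 Wa1 Wa2 x t))^2 * (norm (yv Wa1 Wa2 x t))^2
             + \<alpha> * (avec Wc1 Wc2 Wa1 Wa2 x t \<bullet> ((Wc1 t - Wc1s) *v yv Wa1 Wa2 x t))^2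
             + \<alpha> * (ec \<alpha> r Wc1 Wc2 Wa1 Wa2 x t)^2)"
proof -
  let ?e = "ec \<alpha> r Wc1 Wc2 Wa1 Wa2 x t"
  let ?a = "avec Wc1 Wc2 Wa1 Wa2 x t"
  let ?y = "yv Wa1 Wa2 x t"
  define M where "M = Wc1 t - Wc1s"
  define c where "c = lc * \<alpha> * ?e"
  define z where "z = ?a \<bullet> (M *v ?y)"
  have h: "Wc1 (t+1) = Wc1 t - c *\<^sub>R outer ?a ?y"
    unfolding c_def
    using conjunct1[OF conjunct2[OF assms(6)[unfolded adhdp_updates_def, rule_format, OF assms(8), unfolded Let_def]]] .
  have W: "Wc1 (t+1) - Wc1s = M - c *\<^sub>R outer ?a ?y" unfolding h M_def by (simp only: diff_diff_eq add.commute)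
  have "L3 (t+1) - L3 t = 1/(lc*\<gamma>2) * ((\<Sum>k\<in>UNIV. \<Sum>j\<in>UNIV. ((M - c *\<^sub>R outer ?a ?y)$k$j)^2) - (\<Sum>k\<in>UNIV. \<Sum>j\<in>UNIV. (M$k$j)^2))"
    unfolding assms(7) W M_def[symmetric] tr by (rule right_diff_distrib[symmetric])
  also have "\<dots> = 1/(lc*\<gamma>2) * (c^2 * (norm ?a)^2 * (norm ?y)^2 - 2*c*z)"
    unfolding key z_def ..
  also have "\<dots> \<le> 1/\<gamma>2 * (\<alpha>^2 * lc * ?e^2 * (norm ?a)^2 * (norm ?y)^2 + \<alpha> * z^2 + \<alpha> * ?e^2)"
    unfolding c_def by (rule ineq[OF assms(3) assms(1) assms(5)])
  finally show ?thesis unfolding z_def M_def .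
qed

end
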